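(* For every $n\in\mathbb{N}$ there exists a strongly $n$-connected $2n$-regular oriented graph on $16n+1$ vertices with no Hamilton cycle.
   Context: An oriented graph has at most one edge between any two vertices; $d$-regular means every vertex has in- and outdegree exactly $d$. Strongly $n$-connected means that the digraph has more than $n$ vertices and remains strongly connected after deleting any set of fewer than $n$ vertices. A Hamilton cycle is a directed cycle through all vertices. *)

theory Defs
  imports Main
begin

definition oriented_graph :: "'a set \<Rightarrow> ('a \<times> 'a) set \<Rightarrow> bool" where
  "oriented_graph V E \<longleftrightarrow> E \<subseteq> V \<times> V \<and> (\<forall>v. (v, v) \<notin> E) \<and>
     (\<forall>u v. (u, v) \<in> E \<longrightarrow> (v, u) \<notin> E)"

definition out_nbrs :: "('a \<times> 'a) set \<Rightarrow> 'a \<Rightarrow> 'a set" where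
  "out_nbrs E v = {u. (v, u) \<in> E}"

definition in_nbrs :: "('a \<times> 'a) set \<Rightarrow> 'a \<Rightarrow> 'a set" where
  "in_nbrs E v = {u. (u, v) \<in> E}"

definition regular_digraph :: "nat \<Rightarrow> 'a set \<Rightarrow> ('a \<times> 'a) set \<Rightarrow> bool" where
  "regular_digraph d V E \<longleftrightarrow>
     (\<forall>v\<in>V. card (out_nbrs E v) = d \<and> card (in_nbrs E v) = d)"

definition strongly_connected :: "'a set \<Rightarrow> ('a \<times> 'a) set \<Rightarrow> bool" where
  "strongly_connected V E \<longleftrightarrow> (\<forall>u\<in>V. \<forall>v\<in>V. (u, v) \<in> (E \<inter> (V \<times> V))\<^sup>*)"

definition strongly_n_connected :: "nat \<Rightarrow> 'a set \<Rightarrow> ('a \<times> 'a) set \<Rightarrow> bool" where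
  "strongly_n_connected n V E \<longleftrightarrow> card V > n \<and>
     (\<forall>S. S \<subseteq> V \<and> card S < n \<longrightarrow>
        strongly_connected (V - S) (E \<inter> ((V - S) \<times> (V - S))))"

definition hamiltonian :: "'a set \<Rightarrow> ('a \<times> 'a) set \<Rightarrow> bool" where
  "hamiltonian V E \<longleftrightarrow> (\<exists>vs. vs \<noteq> [] \<and> distinct vs \<and> set vs = V \<and>
     (\<forall>i < length vs. (vs ! i, vs ! ((i + 1) mod length vs)) \<in> E))"

end

theory Submission
  imports Defs "HOL-Library.Nat_Bijection"
begin


lemma rtrancl_map_inj:
  assumes "(u, v) \<in> R\<^sup>*"
  shows "(f u, f v) \<in> (map_prod f f ` R)\<^sup>*"
  using assms
proof (induction rule: rtrancl_induct)
  case base then show ?case by simp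
next
  case (step y z)
  then have "(f y, f z) \<in> map_prod f f ` R" by force
  with step show ?case by (meson rtrancl.rtrancl_into_rtrancl)
qed

lemma transfer_graph:
  fixes f :: "'a \<Rightarrow> 'b"
  assumes inj: "inj f" and fin: "finite V"
    and og: "oriented_graph V E" and reg: "regular_digraph d V E"
    and sc: "strongly_n_connected n V E" and nh: "\<not> hamiltonian V E"
  shows "finite (f ` V) \<and> card (f ` V) = card V \<and> oriented_graph (f ` V) (map_prod f f ` E) \<and>
     regular_digraph d (f ` V) (map_prod f f ` E) \<and> strongly_n_connected n (f ` V) (map_prod f f ` E) \<and>
     \<not> hamiltonian (f ` V) (map_prod f f ` E)"
proof (intro conjI)
  show "finite (f ` V)" using fin by simp
  show cV: "card (f ` V) = card V" using inj by (simp add: card_image inj_on_subset)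
  have memE: "(f a, f b) \<in> map_prod f f ` X \<longleftrightarrow> (a, b) \<in> X" for a b X
    using inj by (auto simp: inj_eq)
  show "oriented_graph (f ` V) (map_prod f f ` E)"
    unfolding oriented_graph_def
  proof (intro conjI allI)
    show "map_prod f f ` E \<subseteq> f ` V \<times> f ` V" using og unfolding oriented_graph_def by auto
    fix u v
    show "(v, v) \<notin> map_prod f f ` E" using og unfolding oriented_graph_def
      using inj by (auto dest: injD)
    show "(u, v) \<in> map_prod f f ` E \<longrightarrow> (v, u) \<notin> map_prod f f ` E"
    proof (intro impI notI)
      assume "(u, v) \<in> map_prod f f ` E" "(v, u) \<in> map_prod f f ` E"
      then obtain a b where "(a,b) \<in> E" "u = f a" "v = f b" by auto
      with \<open>(v, u) \<in> map_prod f f ` E\<close> have "(b, a) \<in> E" using memE by simp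
      with \<open>(a,b) \<in> E\<close> og show False unfolding oriented_graph_def by blast
    qed
  qed
  have outn: "out_nbrs (map_prod f f ` E) (f v) = f ` out_nbrs E v" for v
    unfolding out_nbrs_def using inj by (auto simp: inj_eq)
  have inn: "in_nbrs (map_prod f f ` E) (f v) = f ` in_nbrs E v" for v
    unfolding in_nbrs_def using inj by (auto simp: inj_eq)
  show "regular_digraph d (f ` V) (map_prod f f ` E)"
    using reg unfolding regular_digraph_def
    by (auto simp: outn inn card_image inj_on_subset[OF inj])
  show "strongly_n_connected n (f ` V) (map_prod f f ` E)"
    unfolding strongly_n_connected_def
  proof (intro conjI allI impI)
    show "n < card (f ` V)" using sc cV unfolding strongly_n_connected_def by simp
    fix S' assume S': "S' \<subseteq> f ` V \<and> card S' < n"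
    define S where "S = V \<inter> f -` S'"
    have fS: "f ` S = S'" using S' unfolding S_def by auto
    have cS: "card S < n" using S' fS inj by (metis card_image inj_on_subset subset_UNIV)
    have SV: "S \<subseteq> V" unfolding S_def by auto
    have scS: "strongly_connected (V - S) (E \<inter> ((V - S) \<times> (V - S)))"
      using sc SV cS unfolding strongly_n_connected_def by blast
    have eqV: "f ` V - S' = f ` (V - S)" using inj fS by (auto simp: S_def)
    have eqE: "map_prod f f ` E \<inter> (f ` (V - S) \<times> f ` (V - S)) \<inter> (f ` (V - S) \<times> f ` (V - S))
        = map_prod f f ` (E \<inter> ((V - S) \<times> (V - S)) \<inter> ((V - S) \<times> (V - S)))"
      using inj by (auto simp: inj_eq)
    show "strongly_connected (f ` V - S') (map_prod f f ` E \<inter> ((f ` V - S') \<times> (f ` V - S')))"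
      unfolding eqV strongly_connected_def eqE
      using scS unfolding strongly_connected_def
      by (auto intro: rtrancl_map_inj)
  qed
  show "\<not> hamiltonian (f ` V) (map_prod f f ` E)"
  proof
    assume "hamiltonian (f ` V) (map_prod f f ` E)"
    then obtain vs where vs: "vs \<noteq> []" "distinct vs" "set vs = f ` V"
      "\<forall>i < length vs. (vs ! i, vs ! ((i + 1) mod length vs)) \<in> map_prod f f ` E"
      unfolding hamiltonian_def by blast
    define ws where "ws = map (inv f) vs"
    have vsws: "vs = map f ws"
    proof -
      have "\<And>x. x \<in> set vs \<Longrightarrow> (f \<circ> inv f) x = x"
        using vs(3) by (auto simp: f_inv_into_f)
      then have "map (f \<circ> inv f) vs = vs" by (rule map_idI)
      then show ?thesis unfolding ws_def by simp
    qed
    have "hamiltonian V E"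
      unfolding hamiltonian_def
    proof (intro exI conjI allI impI)
      show "ws \<noteq> []" using vs(1) ws_def by simp
      show "distinct ws" using vs(2) vsws by (simp add: distinct_map)
      have "f ` set ws = f ` V" using vs(3) vsws by simp
      then show "set ws = V" using inj by (simp add: inj_image_eq_iff)
      fix i assume i: "i < length ws"
      have L: "length vs = length ws" using vsws by simp
      have i2: "(i + 1) mod length ws < length ws" using i by (intro mod_less_divisor) linarith
      have "(vs ! i, vs ! ((i + 1) mod length vs)) \<in> map_prod f f ` E" using vs(4) i L by simp
      then have "(f (ws ! i), f (ws ! ((i + 1) mod length ws))) \<in> map_prod f f ` E"
        using vsws i i2 L by simp
      then show "(ws ! i, ws ! ((i + 1) mod length ws)) \<in> E" by (simp only: memE)
    qed
    with nh show False by simp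
  qed
qed



definition xedge :: "nat \<Rightarrow> nat \<Rightarrow> nat \<Rightarrow> bool" where
  "xedge n k l \<longleftrightarrow> (k < l \<and> l - k \<le> 2*n \<and> \<not>(k < n \<and> l = k + 2*n)) \<or> (l + 2*n < k)"

lemma xedge_irrefl: "\<not> xedge n k k" by (auto simp: xedge_def)
lemma xedge_asym: "xedge n k l \<Longrightarrow> \<not> xedge n l k" by (auto simp: xedge_def)

lemma xout_set: "k < 4*n+1 \<Longrightarrow> {l. l < 4*n+1 \<and> xedge n k l} =
   ({k<..min (k+2*n) (4*n)} - (if k < n then {k+2*n} else {})) \<union> {..<k-2*n}"
  by (auto simp: xedge_def split: if_splits)

lemma xout_card: assumes "k < 4*n+1" "0 < n"
  shows "card {l. l < 4*n+1 \<and> xedge n k l} = 2*n - (if k < n then 1 else 0)"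
proof -
  have d: "({k<..min (k+2*n) (4*n)} - (if k < n then {k+2*n} else {})) \<inter> {..<k-2*n} = {}" by auto
  have c1: "card ({k<..min (k+2*n) (4*n)} - (if k < n then {k+2*n} else {})) = 
     min (k+2*n) (4*n) - k - (if k < n then 1 else 0)"
    using assms by (auto simp: card_Diff_singleton)
  show ?thesis unfolding xout_set[OF assms(1)]
    by (subst card_Un_disjoint) (use d c1 assms in auto)
qed

lemma xin_set: "k < 4*n+1 \<Longrightarrow> {l. l < 4*n+1 \<and> xedge n l k} =
   ({k-2*n..<k} - (if 2*n \<le> k \<and> k < 3*n then {k-2*n} else {})) \<union> {k+2*n<..<4*n+1}"
  by (auto simp: xedge_def split: if_splits)

lemma xin_card: assumes "k < 4*n+1" "0 < n"
  shows "card {l. l < 4*n+1 \<and> xedge n l k} = 2*n - (if 2*n \<le> k \<and> k < 3*n then 1 else 0)"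
proof -
  have d: "({k-2*n..<k} - (if 2*n \<le> k \<and> k < 3*n then {k-2*n} else {})) \<inter> {k+2*n<..<4*n+1} = {}" by auto
  have c1: "card ({k-2*n..<k} - (if 2*n \<le> k \<and> k < 3*n then {k-2*n} else {})) = 
     k - (k - 2*n) - (if 2*n \<le> k \<and> k < 3*n then 1 else 0)"
    using assms by (auto simp: card_Diff_singleton)
  show ?thesis unfolding xin_set[OF assms(1)]
    by (subst card_Un_disjoint) (use d c1 assms in auto)
qed



lemma gap_small:
  assumes "{c<..<b} \<subseteq> {..<4*n+1} - W" "card ({..<4*n+1} - W) < n"
  shows "b - c \<le> n"
proof -
  have "card {c<..<b} \<le> card ({..<4*n+1} - W)" using assms(1) by (intro card_mono) auto
  then show ?thesis using assms(2) by simp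
qed

lemma xreach_fwd:
  assumes n: "0 < n" and W: "W \<subseteq> {..<4*n+1}" and cW: "card ({..<4*n+1} - W) < n"
    and a: "a \<in> W"
  shows "b \<in> W \<Longrightarrow> a \<le> b \<Longrightarrow> (a, b) \<in> {(k,l). k\<in>W \<and> l\<in>W \<and> xedge n k l}\<^sup>*"
proof (induction b rule: less_induct)
  case (less b)
  show ?case
  proof (cases "a = b")
    case True then show ?thesis by simp
  next
    case False
    define C where "C = {c \<in> W. a \<le> c \<and> c < b}"
    have "a \<in> C" using a False less.prems unfolding C_def by auto
    have fC: "finite C" unfolding C_def by auto
    define c where "c = Max C"
    have cC: "c \<in> C" using fC \<open>a \<in> C\<close> unfolding c_def using Max_in by blast
    have gap: "{c<..<b} \<subseteq> {..<4*n+1} - W"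
    proof
      fix x assume x: "x \<in> {c<..<b}"
      have "x \<notin> C" using x fC unfolding c_def by (meson Max_ge greaterThanLessThan_iff leD)
      then have "x \<notin> W" using x cC unfolding C_def by auto
      moreover have "x < 4*n+1" using x less.prems W by auto
      ultimately show "x \<in> {..<4*n+1} - W" by auto
    qed
    have "b - c \<le> n" using gap_small[OF gap cW] .
    moreover have "c < b" using cC C_def by auto
    ultimately have "xedge n c b" using n unfolding xedge_def by auto
    then have e: "(c, b) \<in> {(k,l). k\<in>W \<and> l\<in>W \<and> xedge n k l}" using cC less.prems C_def by auto
    have "(a, c) \<in> {(k,l). k\<in>W \<and> l\<in>W \<and> xedge n k l}\<^sup>*"
      using less.IH[of c] cC unfolding C_def by auto
    with e show ?thesis by (meson rtrancl.rtrancl_into_rtrancl)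
  qed
qed

lemma xreach:
  assumes n: "0 < n" and W: "W \<subseteq> {..<4*n+1}" and cW: "card ({..<4*n+1} - W) < n"
    and a: "a \<in> W" and b: "b \<in> W"
  shows "(a, b) \<in> {(k,l). k\<in>W \<and> l\<in>W \<and> xedge n k l}\<^sup>*"
proof (cases "a \<le> b")
  case True then show ?thesis using xreach_fwd[OF n W cW a b] by simp
next
  case False
  have fW: "finite W" using W finite_subset by blast
  define t where "t = Max W"
  define u where "u = Min W"
  have tW: "t \<in> W" and uW: "u \<in> W" using fW a unfolding t_def u_def by (auto intro: Max_in Min_in)
  have at: "a \<le> t" using fW a unfolding t_def by simp
  have ub: "u \<le> b" using fW b unfolding u_def by simp
  have g1: "{t<..<4*n+1} \<subseteq> {..<4*n+1} - W" using fW unfolding t_def by (auto simp: Max_ge leD)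
  have g2: "{u - 1 <..<u} \<subseteq> {..<4*n+1} - W" using fW uW W by auto
  have "4*n+1 - t \<le> n" using gap_small[OF g1 cW] .
  moreover have "u < n"
  proof -
    have "{..<u} \<subseteq> {..<4*n+1} - W" using fW uW W unfolding u_def by (auto simp: Min_le leD)
    then have "card {..<u} \<le> card ({..<4*n+1} - W)" by (intro card_mono) auto
    then show ?thesis using cW by simp
  qed
  ultimately have "xedge n t u" unfolding xedge_def by auto
  then have e: "(t, u) \<in> {(k,l). k\<in>W \<and> l\<in>W \<and> xedge n k l}" using tW uW by auto
  have r1: "(a, t) \<in> {(k,l). k\<in>W \<and> l\<in>W \<and> xedge n k l}\<^sup>*" using xreach_fwd[OF n W cW a tW at] .
  have r2: "(u, b) \<in> {(k,l). k\<in>W \<and> l\<in>W \<and> xedge n k l}\<^sup>*" using xreach_fwd[OF n W cW uW b ub] .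
  from r1 e r2 show ?thesis by (meson rtrancl.rtrancl_into_rtrancl rtrancl_trans)
qed



datatype vtx = Y1 nat | A nat | Y2 nat | B nat | X nat nat

definition Vg :: "nat \<Rightarrow> vtx set" where
  "Vg n = Y1 ` {..<2*n} \<union> A ` {..<2*n} \<union> Y2 ` {..<2*n-1} \<union> B ` {..<2*n}
     \<union> X 0 ` {..<4*n+1} \<union> X 1 ` {..<4*n+1}"

definition Eg :: "nat \<Rightarrow> (vtx \<times> vtx) set" where
  "Eg n = {(Y1 i, A j) | i j. i<2*n \<and> j<2*n} \<union> {(A j, Y2 i) | i j. j<2*n \<and> i<2*n-1}
    \<union> {(Y2 i, B j) | i j. i<2*n-1 \<and> j<2*n} \<union> {(B j, Y1 i) | i j. j<2*n \<and> i<2*n}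
    \<union> {(X c k, X c l) | c k l. c<2 \<and> k<4*n+1 \<and> l<4*n+1 \<and> xedge n k l}
    \<union> {(X c k, B (c*n+k)) | c k. c<2 \<and> k<n}
    \<union> {(A (c*n+k), X c (k+2*n)) | c k. c<2 \<and> k<n}"

lemma V_simps [simp]:
  "Y1 i \<in> Vg n \<longleftrightarrow> i < 2*n" "A i \<in> Vg n \<longleftrightarrow> i < 2*n" "Y2 i \<in> Vg n \<longleftrightarrow> i < 2*n-1"
  "B i \<in> Vg n \<longleftrightarrow> i < 2*n" "X c k \<in> Vg n \<longleftrightarrow> c < 2 \<and> k < 4*n+1"
  by (auto simp: Vg_def less_2_cases_iff)

lemma E_Y1 [simp]: "(Y1 i, w) \<in> Eg n \<longleftrightarrow> i<2*n \<and> (\<exists>j<2*n. w = A j)"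
  by (auto simp: Eg_def)
lemma E_A [simp]: "(A j, w) \<in> Eg n \<longleftrightarrow> (j<2*n \<and> (\<exists>i<2*n-1. w = Y2 i)) \<or>
   (\<exists>c k. c<2 \<and> k<n \<and> j = c*n+k \<and> w = X c (k+2*n))"
  by (auto simp: Eg_def)
lemma E_Y2 [simp]: "(Y2 i, w) \<in> Eg n \<longleftrightarrow> i<2*n-1 \<and> (\<exists>j<2*n. w = B j)"
  by (auto simp: Eg_def)
lemma E_B [simp]: "(B j, w) \<in> Eg n \<longleftrightarrow> j<2*n \<and> (\<exists>i<2*n. w = Y1 i)"
  by (auto simp: Eg_def)
lemma E_X [simp]: "(X c k, w) \<in> Eg n \<longleftrightarrow> c<2 \<and> k<4*n+1 \<and>
   ((\<exists>l<4*n+1. xedge n k l \<and> w = X c l) \<or> (k<n \<and> w = B (c*n+k)))"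
  by (auto simp: Eg_def)

lemma finV: "finite (Vg n)" by (simp add: Vg_def)

lemma cardV: "0 < n \<Longrightarrow> card (Vg n) = 16*n+1"
  unfolding Vg_def
  by (subst card_Un_disjoint, auto simp: card_image inj_on_def)+

lemma cnk: "c < 2 \<Longrightarrow> k < n \<Longrightarrow> c*n+k < 2*(n::nat)"
proof -
  assume "c < 2" "k < n"
  then have "c*n \<le> 1*n" by (intro mult_le_mono1) auto
  then show ?thesis using \<open>k < n\<close> by linarith
qed

lemma E_sub: "Eg n \<subseteq> Vg n \<times> Vg n"
proof
  fix p assume "p \<in> Eg n"
  then show "p \<in> Vg n \<times> Vg n" unfolding Eg_def by (auto simp: xedge_def cnk)
qed

lemma oriented: "oriented_graph (Vg n) (Eg n)"
  unfolding oriented_graph_def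
proof (intro conjI allI impI E_sub)
  fix v show "(v, v) \<notin> Eg n" by (cases v) (auto simp: xedge_irrefl)
next
  fix u v assume "(u, v) \<in> Eg n"
  then show "(v, u) \<notin> Eg n" by (cases u; cases v) (auto dest: xedge_asym)
qed



lemma decomp: "0 < (n::nat) \<Longrightarrow> j < 2*n \<Longrightarrow> (c<2 \<and> k<n \<and> j = c*n+k) \<longleftrightarrow> (c = j div n \<and> k = j mod n)"
proof
  assume "0 < n" "c<2 \<and> k<n \<and> j = c*n+k"
  then show "c = j div n \<and> k = j mod n" by simp
next
  assume n: "0 < n" "j < 2*n" and "c = j div n \<and> k = j mod n"
  moreover have "j div n < 2" using n by (simp add: div_less_iff_less_mult)
  ultimately show "c<2 \<and> k<n \<and> j = c*n+k" by simp
qed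

lemma decomp2: "0 < (n::nat) \<Longrightarrow> j < 2*n \<Longrightarrow> j div n < 2 \<and> j mod n < n \<and> j mod n < 4*n+1"
proof -
  assume "0 < n" "j < 2*n"
  moreover have "j mod n < n" using \<open>0 < n\<close> by simp
  moreover have "j mod n < 4*n+1" using \<open>j mod n < n\<close> by linarith
  ultimately show ?thesis by (simp add: div_less_iff_less_mult)
qed

lemma out_Y1: "i < 2*n \<Longrightarrow> out_nbrs (Eg n) (Y1 i) = A ` {..<2*n}"
  unfolding out_nbrs_def by auto
lemma in_Y1: "i < 2*n \<Longrightarrow> in_nbrs (Eg n) (Y1 i) = B ` {..<2*n}"
  unfolding in_nbrs_def by (rule set_eqI, case_tac x) auto
lemma out_Y2: "i < 2*n-1 \<Longrightarrow> out_nbrs (Eg n) (Y2 i) = B ` {..<2*n}"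
  unfolding out_nbrs_def by auto
lemma in_Y2: "i < 2*n-1 \<Longrightarrow> in_nbrs (Eg n) (Y2 i) = A ` {..<2*n}"
  unfolding in_nbrs_def by (rule set_eqI, case_tac x) auto
lemma in_A: "j < 2*n \<Longrightarrow> in_nbrs (Eg n) (A j) = Y1 ` {..<2*n}"
  unfolding in_nbrs_def by (rule set_eqI, case_tac x) auto
lemma out_B: "j < 2*n \<Longrightarrow> out_nbrs (Eg n) (B j) = Y1 ` {..<2*n}"
  unfolding out_nbrs_def by auto
lemma out_A: "0 < n \<Longrightarrow> j < 2*n \<Longrightarrow> out_nbrs (Eg n) (A j) = Y2 ` {..<2*n-1} \<union> {X (j div n) (j mod n + 2*n)}"
  unfolding out_nbrs_def using decomp[of n j] decomp2[of n j] by auto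
lemma in_B: "0 < n \<Longrightarrow> j < 2*n \<Longrightarrow> in_nbrs (Eg n) (B j) = Y2 ` {..<2*n-1} \<union> {X (j div n) (j mod n)}"
  unfolding in_nbrs_def using decomp[of n j] decomp2[of n j] by (intro set_eqI, case_tac x) auto
lemma out_X: "c < 2 \<Longrightarrow> k < 4*n+1 \<Longrightarrow> out_nbrs (Eg n) (X c k) =
   X c ` {l. l < 4*n+1 \<and> xedge n k l} \<union> (if k < n then {B (c*n+k)} else {})"
  unfolding out_nbrs_def by auto
lemma in_X: "0 < n \<Longrightarrow> c < 2 \<Longrightarrow> k < 4*n+1 \<Longrightarrow> in_nbrs (Eg n) (X c k) =
   X c ` {l. l < 4*n+1 \<and> xedge n l k} \<union> (if 2*n \<le> k \<and> k < 3*n then {A (c*n+(k-2*n))} else {})"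
  unfolding in_nbrs_def
  apply (rule set_eqI, case_tac x)
      apply (auto simp: xedge_def)
  apply (rule_tac x=c in exI, simp, rule_tac x="k-2*n" in exI, simp)
  done



lemma regular: assumes n: "0 < n" shows "regular_digraph (2*n) (Vg n) (Eg n)"
  unfolding regular_digraph_def
proof
  fix v assume v: "v \<in> Vg n"
  have cY2: "card (Y2 ` {..<2*n-1}) = 2*n-1" by (simp add: card_image inj_on_def)
  show "card (out_nbrs (Eg n) v) = 2*n \<and> card (in_nbrs (Eg n) v) = 2*n"
  proof (cases v)
    case (Y1 i) then show ?thesis using v by (simp add: out_Y1 in_Y1 card_image inj_on_def)
  next
    case (Y2 i) then show ?thesis using v by (simp add: out_Y2 in_Y2 card_image inj_on_def)
  next
    case (A j)
    have "card (Y2 ` {..<2*n-1} \<union> {X (j div n) (j mod n + 2*n)}) = 2*n-1+1"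
      using cY2 by (subst card_Un_disjoint) auto
    then show ?thesis using A v n by (simp add: out_A in_A card_image inj_on_def)
  next
    case (B j)
    have "card (Y2 ` {..<2*n-1} \<union> {X (j div n) (j mod n)}) = 2*n-1+1"
      using cY2 by (subst card_Un_disjoint) auto
    then show ?thesis using B v n by (simp add: out_B in_B card_image inj_on_def)
  next
    case (X c k)
    then have ck: "c < 2" "k < 4*n+1" using v by auto
    have o: "card (X c ` {l. l < 4*n+1 \<and> xedge n k l}) = 2*n - (if k < n then 1 else 0)"
      using xout_card[OF ck(2) n] by (simp add: card_image inj_on_def)
    have i: "card (X c ` {l. l < 4*n+1 \<and> xedge n l k}) = 2*n - (if 2*n \<le> k \<and> k < 3*n then 1 else 0)"
      using xin_card[OF ck(2) n] by (simp add: card_image inj_on_def)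
    have fo: "finite (X c ` {l. l < 4*n+1 \<and> xedge n k l})" by simp
    have fi: "finite (X c ` {l. l < 4*n+1 \<and> xedge n l k})" by simp
    have "card (out_nbrs (Eg n) (X c k)) = 2*n"
    proof (cases "k < n")
      case True
      have "card (X c ` {l. l < 4*n+1 \<and> xedge n k l} \<union> {B (c*n+k)}) = (2*n-1) + 1"
        using o True fo by (subst card_Un_disjoint) auto
      then show ?thesis using True ck n by (simp add: out_X)
    next
      case False then show ?thesis using ck o by (simp add: out_X)
    qed
    moreover have "card (in_nbrs (Eg n) (X c k)) = 2*n"
    proof (cases "2*n \<le> k \<and> k < 3*n")
      case True
      have "card (X c ` {l. l < 4*n+1 \<and> xedge n l k} \<union> {A (c*n+(k-2*n))}) = (2*n-1) + 1"
        using i True fi by (subst card_Un_disjoint) auto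
      then show ?thesis using True ck n by (simp add: in_X)
    next
      case False
      then have "in_nbrs (Eg n) (X c k) = X c ` {l. l < 4*n+1 \<and> xedge n l k}"
        by (simp only: in_X[OF n ck] if_not_P[OF False]) simp
      then show ?thesis using i False by simp
    qed
    ultimately show ?thesis using X by simp
  qed
qed



lemma avoid: "finite S \<Longrightarrow> finite T \<Longrightarrow> card S < card T \<Longrightarrow> \<exists>x\<in>T. x \<notin> S"
  by (meson card_mono not_le subsetI)

lemma pair_avoid:
  assumes fS: "finite S" and cS: "card S < (n::nat)" and inj: "\<And>i j. f i = g j \<Longrightarrow> False"
    and injf: "inj f" and injg: "inj g"
  shows "\<exists>i<n. f i \<notin> S \<and> g i \<notin> S"
proof (rule ccontr)
  assume "\<not> ?thesis"
  then have all: "\<forall>i<n. f i \<in> S \<or> g i \<in> S" by auto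
  define h where "h i = (if f i \<in> S then f i else g i)" for i
  have "h ` {..<n} \<subseteq> S" using all unfolding h_def by auto
  moreover have "inj_on h {..<n}"
  proof (rule inj_onI)
    fix x y assume "h x = h y"
    then show "x = y" unfolding h_def using inj[of x y] inj[of y x] injf injg
      by (auto split: if_splits dest: injD)
  qed
  ultimately have "card {..<n} \<le> card S" using fS by (metis card_inj_on_le)
  with cS show False by simp
qed

lemma strong: assumes n: "0 < n" shows "strongly_n_connected n (Vg n) (Eg n)"
  unfolding strongly_n_connected_def
proof (intro conjI allI impI)
  show "n < card (Vg n)" using cardV[OF n] by simp
  fix S assume S: "S \<subseteq> Vg n \<and> card S < n"
  have fS: "finite S" using S finV finite_subset by blast
  have cS: "card S < n" using S by simp
  define W where "W = Vg n - S"
  define Q where "Q = Eg n \<inter> (W \<times> W) \<inter> (W \<times> W)"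
  have e: "(u, v) \<in> Q\<^sup>*" if "(u, v) \<in> Eg n" "u \<notin> S" "v \<notin> S" for u v
  proof -
    have "u \<in> Vg n" "v \<in> Vg n" using that(1) E_sub by auto
    then have "(u, v) \<in> Q" using that unfolding Q_def W_def by auto
    then show ?thesis by simp
  qed
  have inW: "w \<in> W \<Longrightarrow> w \<notin> S" for w unfolding W_def by auto
  obtain i0 where i0: "i0 < 2*n" "Y1 i0 \<notin> S"
    using avoid[OF fS, of "Y1 ` {..<2*n}"] cS by (auto simp: card_image inj_on_def)
  obtain ja where ja: "ja < 2*n" "A ja \<notin> S"
    using avoid[OF fS, of "A ` {..<2*n}"] cS by (auto simp: card_image inj_on_def)
  obtain jb where jb: "jb < 2*n" "B jb \<notin> S"
    using avoid[OF fS, of "B ` {..<2*n}"] cS by (auto simp: card_image inj_on_def)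
  obtain jy where jy: "jy < 2*n-1" "Y2 jy \<notin> S"
  proof -
    have "card S < card (Y2 ` {..<2*n-1})" using cS n by (simp add: card_image inj_on_def)
    then show ?thesis using avoid[OF fS, of "Y2 ` {..<2*n-1}"] that by auto
  qed
  define H where "H = Y1 i0"
  have Ha: "(H, A ja) \<in> Q\<^sup>*" using e i0 ja unfolding H_def by auto
  have ay: "(A ja, Y2 jy) \<in> Q\<^sup>*" using e ja jy by auto
  have yb: "(Y2 jy, B jb) \<in> Q\<^sup>*" using e jy jb by auto
  have bH: "(B jb, H) \<in> Q\<^sup>*" using e jb i0 unfolding H_def by auto
  note tr = rtrancl_trans[where r=Q]
  have Xint: "(X c k1, X c k2) \<in> Q\<^sup>*"
    if c: "c < 2" and k: "k1 < 4*n+1" "k2 < 4*n+1" "X c k1 \<notin> S" "X c k2 \<notin> S" for c k1 k2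
  proof -
    define Wc where "Wc = {k. k < 4*n+1 \<and> X c k \<notin> S}"
    have Wc: "Wc \<subseteq> {..<4*n+1}" unfolding Wc_def by auto
    have "X c ` ({..<4*n+1} - Wc) \<subseteq> S" unfolding Wc_def by auto
    then have "card (X c ` ({..<4*n+1} - Wc)) \<le> card S" using fS by (simp add: card_mono)
    then have cW: "card ({..<4*n+1} - Wc) < n" using cS by (simp add: card_image inj_on_def)
    have "(k1, k2) \<in> {(k,l). k\<in>Wc \<and> l\<in>Wc \<and> xedge n k l}\<^sup>*"
      using xreach[OF n Wc cW] k unfolding Wc_def by auto
    then have "(X c k1, X c k2) \<in> (map_prod (X c) (X c) ` {(k,l). k\<in>Wc \<and> l\<in>Wc \<and> xedge n k l})\<^sup>*"
      by (rule rtrancl_map_inj)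
    moreover have "map_prod (X c) (X c) ` {(k,l). k\<in>Wc \<and> l\<in>Wc \<and> xedge n k l} \<subseteq> Q"
      unfolding Q_def W_def Wc_def using c by auto
    ultimately show ?thesis using rtrancl_mono by blast
  qed
  have hub: "(H, w) \<in> Q\<^sup>* \<and> (w, H) \<in> Q\<^sup>*" if w: "w \<in> W" for w
  proof (cases w)
    case (Y1 i)
    then have "i < 2*n" "Y1 i \<notin> S" using w unfolding W_def by auto
    then have "(B jb, Y1 i) \<in> Q\<^sup>*" "(Y1 i, A ja) \<in> Q\<^sup>*" using e jb ja by auto
    then show ?thesis using Y1 Ha ay yb bH tr by blast
  next
    case (A j)
    then have "j < 2*n" "A j \<notin> S" using w unfolding W_def by auto
    then have "(H, A j) \<in> Q\<^sup>*" "(A j, Y2 jy) \<in> Q\<^sup>*" using e i0 jy unfolding H_def by auto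
    then show ?thesis using A yb bH tr by blast
  next
    case (Y2 j)
    then have "j < 2*n-1" "Y2 j \<notin> S" using w unfolding W_def by auto
    then have "(A ja, Y2 j) \<in> Q\<^sup>*" "(Y2 j, B jb) \<in> Q\<^sup>*" using e ja jb by auto
    then show ?thesis using Y2 Ha bH tr by blast
  next
    case (B j)
    then have "j < 2*n" "B j \<notin> S" using w unfolding W_def by auto
    then have "(Y2 jy, B j) \<in> Q\<^sup>*" "(B j, H) \<in> Q\<^sup>*" using e jy i0 unfolding H_def by auto
    then show ?thesis using B Ha ay tr by blast
  next
    case (X c k)
    then have ck: "c < 2" "k < 4*n+1" "X c k \<notin> S" using w unfolding W_def by auto
    obtain i where i: "i < n" "X c i \<notin> S" "B (c*n+i) \<notin> S"
      using pair_avoid[OF fS cS, of "X c" "\<lambda>i. B (c*n+i)"] by (auto simp: inj_def)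
    obtain i' where i': "i' < n" "A (c*n+i') \<notin> S" "X c (i'+2*n) \<notin> S"
      using pair_avoid[OF fS cS, of "\<lambda>i. A (c*n+i)" "\<lambda>i. X c (i+2*n)"] by (auto simp: inj_def)
    have cb: "c*n+i < 2*n" "c*n+i' < 2*n" using cnk ck i i' by auto
    have "(X c i, B (c*n+i)) \<in> Q\<^sup>*" using e i ck by auto
    moreover have "(B (c*n+i), H) \<in> Q\<^sup>*" using e i i0 cb unfolding H_def by auto
    moreover have "(X c k, X c i) \<in> Q\<^sup>*" using Xint ck i by auto
    moreover have "(H, A (c*n+i')) \<in> Q\<^sup>*" using e i' i0 cb unfolding H_def by auto
    moreover have "(A (c*n+i'), X c (i'+2*n)) \<in> Q\<^sup>*" using e i' ck by auto
    moreover have "(X c (i'+2*n), X c k) \<in> Q\<^sup>*" using Xint ck i' by auto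
    ultimately show ?thesis using X tr by blast
  qed
  show "strongly_connected (Vg n - S) (Eg n \<inter> ((Vg n - S) \<times> (Vg n - S)))"
    unfolding strongly_connected_def
  proof (intro ballI)
    fix u v assume "u \<in> Vg n - S" "v \<in> Vg n - S"
    then have "(u, H) \<in> Q\<^sup>*" "(H, v) \<in> Q\<^sup>*" using hub unfolding W_def by auto
    then show "(u, v) \<in> (Eg n \<inter> ((Vg n - S) \<times> (Vg n - S)) \<inter> ((Vg n - S) \<times> (Vg n - S)))\<^sup>*"
      using tr unfolding Q_def W_def by blast
  qed
qed



lemma card_idx: assumes "distinct vs"
  shows "card {i. i < length vs \<and> P (vs ! i)} = card {x \<in> set vs. P x}"
proof -
  have "{x \<in> set vs. P x} = nth vs ` {i. i < length vs \<and> P (vs ! i)}"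
    by (auto simp: in_set_conv_nth)
  moreover have "inj_on (nth vs) {i. i < length vs \<and> P (vs ! i)}"
    using assms by (intro inj_on_nth) auto
  ultimately show ?thesis by (simp add: card_image)
qed

lemma nonham: assumes n: "0 < n" shows "\<not> hamiltonian (Vg n) (Eg n)"
proof
  assume "hamiltonian (Vg n) (Eg n)"
  then obtain vs where vs: "vs \<noteq> []" "distinct vs" "set vs = Vg n"
    "\<forall>i < length vs. (vs ! i, vs ! ((i + 1) mod length vs)) \<in> Eg n"
    unfolding hamiltonian_def by blast
  define L where "L = length vs"
  have L: "0 < L" using vs(1) unfolding L_def by simp
  define nx where "nx i = (i + 1) mod L" for i
  have nxL: "nx i < L" for i unfolding nx_def using L by simp
  have edge: "i < L \<Longrightarrow> (vs ! i, vs ! (nx i)) \<in> Eg n" for i using vs(4) unfolding nx_def L_def by simp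
  have exit: "\<exists>i<L. (\<exists>k. vs ! i = X c k) \<and> (\<exists>k. vs ! (nx i) = B k)" if c: "c < 2" for c
  proof -
    have "\<exists>i<L. (\<exists>k. vs ! i = X c k) \<and> \<not> (\<exists>k. vs ! (nx i) = X c k)"
    proof (rule ccontr)
      assume "\<not> ?thesis"
      then have all: "\<And>i. i < L \<Longrightarrow> (\<exists>k. vs ! i = X c k) \<Longrightarrow> (\<exists>k. vs ! (nx i) = X c k)" by blast
      have "X c 0 \<in> set vs" using vs(3) c by simp
      then obtain i0 where i0: "i0 < L" "vs ! i0 = X c 0" unfolding L_def by (auto simp: in_set_conv_nth)
      have all_d: "\<exists>k. vs ! ((i0 + d) mod L) = X c k" for d
      proof (induction d)
        case 0 then show ?case using i0 by simp
      next
        case (Suc d)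
        have "(i0 + Suc d) mod L = nx ((i0 + d) mod L)" unfolding nx_def by (simp add: mod_Suc_eq)
        then show ?case using all[OF _ Suc] L by simp
      qed
      have "Y1 0 \<in> set vs" using vs(3) n by simp
      then obtain j where j: "j < L" "vs ! j = Y1 0" unfolding L_def by (auto simp: in_set_conv_nth)
      have "(i0 + (j + L - i0)) mod L = j" using i0 j by simp
      then show False using all_d[of "j + L - i0"] j by auto
    qed
    then obtain i k where i: "i < L" "vs ! i = X c k" "\<not> (\<exists>k. vs ! (nx i) = X c k)"
      by blast
    have "(X c k, vs ! (nx i)) \<in> Eg n" using edge[OF i(1)] i(2) by simp
    then have "\<exists>k. vs ! (nx i) = B k" using i(3) by auto
    then show ?thesis using i by blast
  qed
  obtain i1 k1 b1 where i1: "i1 < L" "vs ! i1 = X 0 k1" "vs ! (nx i1) = B b1" using exit[of 0] by auto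
  obtain i2 k2 b2 where i2: "i2 < L" "vs ! i2 = X 1 k2" "vs ! (nx i2) = B b2" using exit[of 1] by auto
  define J2 where "J2 = {i. i < L \<and> (\<exists>k. vs ! i = Y2 k)}"
  define JB where "JB = {i. i < L \<and> (\<exists>k. vs ! i = B k)}"
  have "{x \<in> set vs. \<exists>k. x = Y2 k} = Y2 ` {..<2*n-1}" unfolding vs(3) by auto
  then have cJ2: "card J2 = 2*n-1" using card_idx[OF vs(2), of "\<lambda>x. \<exists>k. x = Y2 k"]
    unfolding J2_def L_def by (simp add: card_image inj_on_def)
  have "{x \<in> set vs. \<exists>k. x = B k} = B ` {..<2*n}" unfolding vs(3) by auto
  then have cJB: "card JB = 2*n" using card_idx[OF vs(2), of "\<lambda>x. \<exists>k. x = B k"]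
    unfolding JB_def L_def by (simp add: card_image inj_on_def)
  define J where "J = insert i1 (insert i2 J2)"
  have fJ2: "finite J2" unfolding J2_def by simp
  have "i1 \<noteq> i2" using i1 i2 by auto
  moreover have "i1 \<notin> J2" "i2 \<notin> J2" using i1 i2 unfolding J2_def by auto
  ultimately have cJ: "card J = 2*n+1" unfolding J_def using fJ2 cJ2 n by simp
  have sub: "nx ` J \<subseteq> JB"
  proof
    fix x assume "x \<in> nx ` J"
    then obtain i where i: "i \<in> J" "x = nx i" by auto
    show "x \<in> JB"
    proof (cases "i \<in> J2")
      case True
      then obtain k where "i < L" "vs ! i = Y2 k" unfolding J2_def by auto
      then have "(Y2 k, vs ! (nx i)) \<in> Eg n" using edge by metis
      then show ?thesis using i nxL unfolding JB_def by auto
    next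
      case False
      then have "i = i1 \<or> i = i2" using i unfolding J_def by auto
      then show ?thesis using i1 i2 i nxL unfolding JB_def by auto
    qed
  qed
  have "inj_on nx {..<L}"
  proof (rule inj_onI)
    fix a b assume ab: "a \<in> {..<L}" "b \<in> {..<L}" "nx a = nx b"
    have "nx x = (if x + 1 = L then 0 else x + 1)" if "x < L" for x
      unfolding nx_def using that by auto
    then show "a = b" using ab by (auto split: if_splits)
  qed
  moreover have "J \<subseteq> {..<L}" unfolding J_def J2_def using i1 i2 by auto
  ultimately have "inj_on nx J" by (rule inj_on_subset)
  then have "card J \<le> card JB" using sub by (intro card_inj_on_le) (auto simp: JB_def)
  then show False using cJ cJB by simp
qed



fun enc :: "vtx \<Rightarrow> nat" where
  "enc (Y1 i) = prod_encode (0, i)"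
| "enc (A i) = prod_encode (1, i)"
| "enc (Y2 i) = prod_encode (2, i)"
| "enc (B i) = prod_encode (3, i)"
| "enc (X c k) = prod_encode (4, prod_encode (c, k))"

lemma inj_enc: "inj enc"
proof (rule injI)
  fix x y assume "enc x = enc y"
  then show "x = y" by (cases x; cases y) auto
qed

theorem proposition7p2:
  fixes n :: nat
  shows "\<exists>(V :: nat set) (E :: (nat \<times> nat) set).
           finite V \<and> card V = 16 * n + 1 \<and> oriented_graph V E \<and>
           regular_digraph (2 * n) V E \<and> strongly_n_connected n V E \<and>
           \<not> hamiltonian V E"
proof (cases "n = 0")
  case True
  have og: "oriented_graph {0::nat} {}" unfolding oriented_graph_def by simp
  have rg: "regular_digraph 0 {0::nat} {}" unfolding regular_digraph_def out_nbrs_def in_nbrs_def by simp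
  have sc: "strongly_n_connected 0 {0::nat} {}" unfolding strongly_n_connected_def by simp
  have nh: "\<not> hamiltonian {0::nat} {}"
  proof
    assume "hamiltonian {0::nat} {}"
    then obtain vs :: "nat list" where "vs \<noteq> []"
      "\<forall>i < length vs. (vs ! i, vs ! ((i + 1) mod length vs)) \<in> ({} :: (nat \<times> nat) set)"
      unfolding hamiltonian_def by blast
    then show False by (metis empty_iff length_greater_0_conv)
  qed
  show ?thesis using True og rg sc nh by (intro exI[of _ "{0::nat}"] exI[of _ "{}"]) simp
next
  case False
  then have n: "0 < n" by simp
  have "finite (enc ` Vg n) \<and> card (enc ` Vg n) = card (Vg n) \<and>
     oriented_graph (enc ` Vg n) (map_prod enc enc ` Eg n) \<and>
     regular_digraph (2*n) (enc ` Vg n) (map_prod enc enc ` Eg n) \<and>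
     strongly_n_connected n (enc ` Vg n) (map_prod enc enc ` Eg n) \<and>
     \<not> hamiltonian (enc ` Vg n) (map_prod enc enc ` Eg n)"
    by (rule transfer_graph[OF inj_enc finV oriented regular[OF n] strong[OF n] nonham[OF n]])
  then show ?thesis using cardV[OF n]
    by (intro exI[of _ "enc ` Vg n"] exI[of _ "map_prod enc enc ` Eg n"]) simp
qed

end
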